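(* In the setup below, if $\alpha\Gamma^2\ge 4\log n+\omega_{\min}+2$ and $\omega_{\min}\ge4$, then $\max(|R|)\le\max(|R_{\mathrm{aprx}}|)+\max(|R_{\mathrm{neg}}|)\le 2$.
   Context: Setup (primitive Gaussian orbitals). Let $n\ge2$ and let $G=([n],E)$ be a graph with at least one edge and maximum degree at most $d$, where $1\le d\le n-1$. For $\zeta>0$ let $\xi_\zeta(\mathbf r)=(2\zeta/\pi)^{3/4}\exp(-\zeta\|\mathbf r\|^2)$ on $\mathbb R^3$. Fix reals $\beta\ge\alpha>0$, $\Gamma>0$, and distinct points $\mathbf x_{i,l}\in\mathbb R^3$ ($i\in[n]$, $l\in\{0,1,\dots,d\}$) such that: for each edge $\{i,j\}\in E$ there is exactly one pair $(p,q)\in[d]^2$ with $\|\mathbf x_{i,p}-\mathbf x_{j,q}\|=\gamma_{i,j}$, where $0<\gamma_{i,j}<\Gamma$ (write $\mathcal B(i,j)=\{(i,p),(j,q)\}$; these sets are disjoint for distinct edges); and every other pair of distinct points is at distance at least $\Gamma$. Primitive orbitals: $\phi_{i,0}(\mathbf r)=\xi_\beta(\mathbf r-\mathbf x_{i,0})$ and $\phi_{i,l}(\mathbf r)=\xi_\alpha(\mathbf r-\mathbf x_{i,l})$ for $l\ge1$. Let $\omega_{i,j}=\alpha\gamma_{i,j}^2$ and $\omega_{\min}=\min_{\{i,j\}\in E}\omega_{i,j}$. Let $S$ be the $n(d+1)\times n(d+1)$ overlap matrix $s_{(i,p),(j,q)}=\int\phi_{i,p}\phi_{j,q}\,d\mathbf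 r$ (positive definite). For a matrix $A$ indexed by the primitive indices $(i,p)$, the edge block $A_{i,j}$ is its $2\times2$ submatrix on $\mathcal B(i,j)$, $A_{\mathrm{block}}$ is obtained from $A$ by setting to zero all off-diagonal entries lying outside every edge block, and $A_{\mathrm{neg}}=A-A_{\mathrm{block}}$. Let $R=S^{-1/2}$, $R_{\mathrm{aprx}}=(S_{\mathrm{block}})^{-1/2}$ and $R_{\mathrm{neg}}=R-R_{\mathrm{aprx}}$. $\max(|A|)$ denotes the largest absolute value of an entry of $A$; $\log$ is the natural logarithm. *)

theory Defs
  imports "HOL-Analysis.Analysis"
begin

definition gauss :: "real \<Rightarrow> real^3 \<Rightarrow> real" where
  "gauss \<zeta> r = (2 * \<zeta> / pi) powr (3/4) * exp (- \<zeta> * (norm r)\<^sup>2)"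

definition orbital :: "real \<Rightarrow> real \<Rightarrow> (nat \<times> nat \<Rightarrow> real^3) \<Rightarrow> nat \<times> nat \<Rightarrow> real^3 \<Rightarrow> real" where
  "orbital \<alpha> \<beta> x il r = (if snd il = 0 then gauss \<beta> (r - x il) else gauss \<alpha> (r - x il))"

definition overlap :: "real \<Rightarrow> real \<Rightarrow> (nat \<times> nat \<Rightarrow> real^3) \<Rightarrow> nat \<times> nat \<Rightarrow> nat \<times> nat \<Rightarrow> real" where
  "overlap \<alpha> \<beta> x a b = (LINT r|lborel. orbital \<alpha> \<beta> x a r * orbital \<alpha> \<beta> x b r)"

text \<open>Real square matrices indexed by a finite set P, represented as functions
  (entries outside P x P are irrelevant, except where stated).\<close>
type_synonym 'i mat = "'i \<Rightarrow> 'i \<Rightarrow> real"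

definition mat_mult :: "'i set \<Rightarrow> 'i mat \<Rightarrow> 'i mat \<Rightarrow> 'i mat" where
  "mat_mult P A B = (\<lambda>a b. \<Sum>c\<in>P. A a c * B c b)"

definition is_identity :: "'i set \<Rightarrow> 'i mat \<Rightarrow> bool" where
  "is_identity P M \<longleftrightarrow> (\<forall>a\<in>P. \<forall>b\<in>P. M a b = (if a = b then 1 else 0))"

definition pos_def :: "'i set \<Rightarrow> 'i mat \<Rightarrow> bool" where
  "pos_def P A \<longleftrightarrow> (\<forall>a\<in>P. \<forall>b\<in>P. A a b = A b a) \<and>
     (\<forall>v. (\<exists>a\<in>P. v a \<noteq> 0) \<longrightarrow> (\<Sum>a\<in>P. \<Sum>b\<in>P. v a * A a b * v b) > 0)"

definition inv_sqrt :: "'i set \<Rightarrow> 'i mat \<Rightarrow> 'i mat" where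
  "inv_sqrt P A = (THE R. (\<forall>a b. (a \<notin> P \<or> b \<notin> P) \<longrightarrow> R a b = 0) \<and> pos_def P R \<and>
       is_identity P (mat_mult P (mat_mult P R R) A))"

definition max_abs :: "'i set \<Rightarrow> 'i mat \<Rightarrow> real" where
  "max_abs P A = Max {\<bar>A a b\<bar> | a b. a \<in> P \<and> b \<in> P}"

end

theory Submission
  imports Defs "HOL-Probability.Distributions" "HOL-Computational_Algebra.Formal_Power_Series"
begin


lemma gauss1d:
  fixes z1 z2 u w :: real assumes z1: "z1 > 0" and z2: "z2 > 0"
  shows "has_bochner_integral lborel (\<lambda>t. exp (-(z1 * (t-u)^2 + z2 * (t-w)^2)))
           (sqrt (pi/(z1+z2)) * exp (-(z1*z2/(z1+z2)) * (u-w)^2))"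
proof -
  define s where "s = z1 + z2"
  have s: "s > 0" using z1 z2 by (simp add: s_def)
  define m where "m = (z1*u + z2*w)/s"
  define sd where "sd = sqrt (inverse (2 * s))"
  have sig2: "sd^2 = inverse (2 * s)" using s by (simp add: sd_def)
  have key: "z1*(t-u)^2 + z2*(t-w)^2 = s * (t-m)^2 + (z1*z2/s)*(u-w)^2" for t
  proof -
    have sm: "s * (t-m) = z1*(t-u) + z2*(t-w)" using s by (simp add: m_def s_def field_simps)
    have r: "s * (z1*(t-u)^2 + z2*(t-w)^2) = (z1*(t-u) + z2*(t-w))^2 + z1*z2*(u-w)^2"
      by (simp add: s_def power2_eq_square algebra_simps)
    have "s * (s * (t-m)^2 + (z1*z2/s)*(u-w)^2) = (s*(t-m))^2 + z1*z2*(u-w)^2"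
      using s by (simp add: power2_eq_square field_simps)
    then have "s * (z1*(t-u)^2 + z2*(t-w)^2) = s * (s * (t-m)^2 + (z1*z2/s)*(u-w)^2)"
      using r sm by simp
    then show ?thesis using s by simp
  qed
  have nd: "normal_density m sd t = sqrt (s/pi) * exp (-(s * (t-m)^2))" for t
    using s unfolding normal_density_def sig2
    by (simp add: real_sqrt_divide field_simps)
  have one: "sqrt (pi/s) * sqrt (s/pi) = 1" using s
    by (simp add: real_sqrt_mult[symmetric])
  have eq: "exp (-(z1*(t-u)^2 + z2*(t-w)^2)) =
      (sqrt (pi/s) * exp (-(z1*z2/s)*(u-w)^2)) * normal_density m sd t" for t
  proof -
    have "exp (-(z1*(t-u)^2 + z2*(t-w)^2)) = exp (-(z1*z2/s)*(u-w)^2) * exp (-(s * (t-m)^2))"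
      unfolding key by (simp add: exp_add[symmetric])
    also have "\<dots> = (sqrt (pi/s) * sqrt (s/pi)) * (exp (-(z1*z2/s)*(u-w)^2) * exp (-(s * (t-m)^2)))"
      using one by simp
    also have "\<dots> = (sqrt (pi/s) * exp (-(z1*z2/s)*(u-w)^2)) * normal_density m sd t"
      unfolding nd by (simp only: mult_ac)
    finally show ?thesis .
  qed
  have nd1: "has_bochner_integral lborel (normal_density m sd) 1"
    unfolding has_bochner_integral_iff using s by (simp add: sd_def)
  show ?thesis
    unfolding s_def[symmetric] eq
    using has_bochner_integral_mult_right[OF nd1, of "sqrt (pi/s) * exp (-(z1*z2/s)*(u-w)^2)"]
    by simp
qed
lemma normsq_basis: "(norm (v::real^3))^2 = (\<Sum>b\<in>Basis. (v \<bullet> b)^2)"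
  unfolding power2_norm_eq_inner by (subst euclidean_inner) (simp add: power2_eq_square)

lemma overlap3:
  fixes y1 y2 :: "real^3" and z1 z2 :: real
  assumes z1: "z1 > 0" and z2: "z2 > 0"
  shows "(LINT r|lborel. gauss z1 (r - y1) * gauss z2 (r - y2)) =
     (2*z1/pi) powr (3/4) * (2*z2/pi) powr (3/4) * (sqrt (pi/(z1+z2)))^3 *
       exp (-(z1*z2/(z1+z2)) * (dist y1 y2)^2)"
proof -
  define C where "C = (2*z1/pi) powr (3/4) * (2*z2/pi) powr (3/4)"
  have C0: "C \<ge> 0" by (simp add: C_def)
  define f where "f = (\<lambda>(b::real^3) t. exp (-(z1*(t - y1 \<bullet> b)^2 + z2*(t - y2 \<bullet> b)^2)))"
  define I where "I = (\<lambda>(b::real^3). sqrt (pi/(z1+z2)) * exp (-(z1*z2/(z1+z2))*(y1 \<bullet> b - y2 \<bullet> b)^2))"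
  have hb: "has_bochner_integral lborel (f b) (I b)" for b
    unfolding f_def I_def using gauss1d[OF z1 z2] by simp
  have fnn: "0 \<le> f b t" for b t by (simp add: f_def)
  have I0: "0 \<le> I b" for b using z1 z2 by (auto simp: I_def intro!: mult_nonneg_nonneg)
  have fm[measurable]: "f b \<in> borel_measurable borel" for b unfolding f_def by simp
  have nnb: "(\<integral>\<^sup>+t. f b t \<partial>lborel) = ennreal (I b)" for b
  proof -
    have "integrable lborel (f b) \<and> integral\<^sup>L lborel (f b) = I b"
      using hb[of b] by (simp add: has_bochner_integral_iff)
    then show ?thesis using fnn by (subst nn_integral_eq_integral) auto
  qed
  have pt: "gauss z1 (r - y1) * gauss z2 (r - y2) = C * (\<Prod>b\<in>Basis. f b (r \<bullet> b))" for r
  proof -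
    have "exp (- z1 * (norm (r - y1))\<^sup>2) * exp (- z2 * (norm (r - y2))\<^sup>2)
        = exp (\<Sum>b\<in>Basis. -(z1*(r \<bullet> b - y1 \<bullet> b)^2 + z2*(r \<bullet> b - y2 \<bullet> b)^2))"
    proof -
      have "(\<Sum>b\<in>(Basis::(real^3) set). -(z1*(r \<bullet> b - y1 \<bullet> b)^2 + z2*(r \<bullet> b - y2 \<bullet> b)^2))
          = - z1 * (\<Sum>b\<in>Basis. ((r - y1) \<bullet> b)^2) + - z2 * (\<Sum>b\<in>Basis. ((r - y2) \<bullet> b)^2)"
        unfolding sum_negf sum.distrib sum_distrib_left[symmetric] by (simp add: inner_diff_left)
      then show ?thesis unfolding exp_add[symmetric] normsq_basis by simp
    qed
    also have "\<dots> = (\<Prod>b\<in>Basis. f b (r \<bullet> b))"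
      by (simp add: exp_sum f_def)
    finally show ?thesis unfolding gauss_def C_def by (simp add: mult_ac)
  qed
  have nn: "(\<integral>\<^sup>+r. ennreal (gauss z1 (r - y1) * gauss z2 (r - y2)) \<partial>lborel)
      = ennreal (C * (\<Prod>b\<in>Basis. I b))"
  proof -
    have "(\<integral>\<^sup>+r. ennreal (gauss z1 (r - y1) * gauss z2 (r - y2)) \<partial>lborel)
        = (\<integral>\<^sup>+r. ennreal C * (\<Prod>b\<in>Basis. ennreal (f b (r \<bullet> b))) \<partial>lborel)"
      unfolding pt using C0 fnn by (intro nn_integral_cong) (simp add: ennreal_mult prod_nonneg prod_ennreal)
    also have "\<dots> = ennreal C * (\<integral>\<^sup>+r. (\<Prod>b\<in>Basis. ennreal (f b (r \<bullet> b))) \<partial>lborel)"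
      by (rule nn_integral_cmult) measurable
    also have "(\<integral>\<^sup>+r. (\<Prod>b\<in>Basis. ennreal (f b (r \<bullet> b))) \<partial>lborel)
        = (\<Prod>b\<in>Basis. (\<integral>\<^sup>+t. ennreal (f b t) \<partial>lborel))"
      by (rule nn_integral_lborel_prod) auto
    also have "\<dots> = (\<Prod>b\<in>Basis. ennreal (I b))" using nnb by simp
    also have "\<dots> = ennreal (\<Prod>b\<in>Basis. I b)" using I0 by (simp add: prod_ennreal)
    finally show ?thesis using C0 I0 by (simp add: ennreal_mult prod_nonneg)
  qed
  have "has_bochner_integral lborel (\<lambda>r. gauss z1 (r - y1) * gauss z2 (r - y2)) (C * (\<Prod>b\<in>Basis. I b))"
  proof (rule has_bochner_integral_nn_integral)
    show "(\<lambda>r. gauss z1 (r - y1) * gauss z2 (r - y2)) \<in> borel_measurable lborel"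
      unfolding gauss_def by measurable
    show "AE x in lborel. 0 \<le> gauss z1 (x - y1) * gauss z2 (x - y2)"
      by (simp add: gauss_def)
    show "0 \<le> C * (\<Prod>b\<in>Basis. I b)" using C0 I0 by (simp add: prod_nonneg)
  qed (rule nn)
  then have "(LINT r|lborel. gauss z1 (r - y1) * gauss z2 (r - y2)) = C * (\<Prod>b\<in>Basis. I b)"
    by (rule has_bochner_integral_integral_eq)
  also have "(\<Prod>b\<in>Basis. I b) = (sqrt (pi/(z1+z2)))^3 * exp (-(z1*z2/(z1+z2)) * (dist y1 y2)^2)"
  proof -
    have "(\<Prod>b\<in>Basis. I b) = (\<Prod>b\<in>(Basis::(real^3) set). sqrt (pi/(z1+z2))) *
          (\<Prod>b\<in>(Basis::(real^3) set). exp (-(z1*z2/(z1+z2))*(y1 \<bullet> b - y2 \<bullet> b)^2))"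
      unfolding I_def by (rule prod.distrib)
    also have "(\<Prod>b\<in>(Basis::(real^3) set). sqrt (pi/(z1+z2))) = (sqrt (pi/(z1+z2)))^3"
      by simp
    also have "(\<Prod>b\<in>(Basis::(real^3) set). exp (-(z1*z2/(z1+z2))*(y1 \<bullet> b - y2 \<bullet> b)^2))
       = exp (-(z1*z2/(z1+z2)) * (dist y1 y2)^2)"
      unfolding exp_sum[OF finite_Basis, symmetric] dist_norm normsq_basis
      by (simp add: inner_diff_left sum_distrib_left)
    finally show ?thesis .
  qed
  finally show ?thesis unfolding C_def by (simp add: mult_ac)
qed

lemma Qeq:
  fixes z1 z2 :: real assumes z1: "z1 > 0" and z2: "z2 > 0"
  shows "(2*z1/pi) powr (3/4) * (2*z2/pi) powr (3/4) * (sqrt (pi/(z1+z2)))^3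
       = (4*z1*z2/(z1+z2)^2) powr (3/4)"
proof -
  define c where "c = pi/(z1+z2)"
  have c: "c > 0" using z1 z2 by (simp add: c_def)
  have "(sqrt c)^3 = (c powr (1/2))^3" using c by (simp add: powr_half_sqrt)
  also have "\<dots> = c powr (3/2)" using c by (simp add: powr_realpow[symmetric] powr_powr)
  also have "\<dots> = (c*c) powr (3/4)" using c by (simp add: powr_mult powr_add[symmetric])
  finally have sc: "(sqrt c)^3 = (c*c) powr (3/4)" .
  have "(2*z1/pi) powr (3/4) * (2*z2/pi) powr (3/4) * (c*c) powr (3/4)
      = ((2*z1/pi) * (2*z2/pi) * (c*c)) powr (3/4)"
  proof -
    have a: "0 \<le> 2*z1/pi" "0 \<le> 2*z2/pi" "0 \<le> c*c" using z1 z2 c by auto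
    show ?thesis using powr_mult[of "(2*z1/pi) * (2*z2/pi)" "c*c" "3/4"] powr_mult[of "2*z1/pi" "2*z2/pi" "3/4"] a
      by simp
  qed
  also have "(2*z1/pi) * (2*z2/pi) * (c*c) = 4*z1*z2/(z1+z2)^2"
    unfolding c_def using z1 z2 by (simp add: field_simps power2_eq_square)
  finally show ?thesis unfolding c_def[symmetric] sc .
qed

lemma Qle: fixes z1 z2 :: real assumes z1: "z1 > 0" and z2: "z2 > 0"
  shows "(4*z1*z2/(z1+z2)^2) powr (3/4) \<le> 1" "0 \<le> (4*z1*z2/(z1+z2)^2) powr (3/4)"
proof -
  have "4*z1*z2 \<le> (z1+z2)^2" using sum_squares_ge_zero[of "z1-z2" 0]
    by (simp add: power2_eq_square algebra_simps)
  then have "4*z1*z2/(z1+z2)^2 \<le> 1" using z1 z2 by (simp add: divide_le_eq_1)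
  then show "(4*z1*z2/(z1+z2)^2) powr (3/4) \<le> 1" using z1 z2
    using powr_mono2[of "3/4" "4*z1*z2/(z1+z2)^2" 1] by (auto intro!: divide_nonneg_nonneg)
  show "0 \<le> (4*z1*z2/(z1+z2)^2) powr (3/4)" by simp
qed

lemma Qone: fixes z :: real assumes "z > 0" shows "(4*z*z/(z+z)^2) powr (3/4) = 1"
  using assms by (simp add: power2_eq_square)

lemma hge: fixes z1 z2 a :: real assumes "0 < a" "a \<le> z1" "a \<le> z2"
  shows "a/2 \<le> z1*z2/(z1+z2)"
proof -
  have "a*z1 \<le> z1*z2" "a*z2 \<le> z1*z2" using assms by (simp_all add: mult_right_mono mult_left_mono mult.commute)
  then have "a*(z1+z2) \<le> 2*(z1*z2)" by (simp add: algebra_simps)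
  then show ?thesis using assms by (simp add: field_simps)
qed


definition idm :: "'i set \<Rightarrow> 'i mat" where
  "idm P = (\<lambda>a b. if a \<in> P \<and> a = b then 1 else 0)"

primrec mpw :: "'i set \<Rightarrow> 'i mat \<Rightarrow> nat \<Rightarrow> 'i mat" where
  "mpw P E 0 = idm P"
| "mpw P E (Suc k) = mat_mult P E (mpw P E k)"

lemma mat_mult_assoc:
  assumes "finite P"
  shows "mat_mult P (mat_mult P A B) C = mat_mult P A (mat_mult P B C)"
proof (intro ext)
  fix a b
  have "(\<Sum>c\<in>P. (\<Sum>d\<in>P. A a d * B d c) * C c b) = (\<Sum>c\<in>P. \<Sum>d\<in>P. A a d * B d c * C c b)"
    by (simp add: sum_distrib_right)
  also have "\<dots> = (\<Sum>d\<in>P. \<Sum>c\<in>P. A a d * B d c * C c b)" by (rule sum.swap)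
  also have "\<dots> = (\<Sum>d\<in>P. A a d * (\<Sum>c\<in>P. B d c * C c b))" by (simp add: sum_distrib_left mult.assoc)
  finally show "mat_mult P (mat_mult P A B) C a b = mat_mult P A (mat_mult P B C) a b"
    by (simp add: mat_mult_def)
qed

definition supp :: "'i set \<Rightarrow> 'i mat \<Rightarrow> bool" where
  "supp P M \<longleftrightarrow> (\<forall>a b. a \<notin> P \<or> b \<notin> P \<longrightarrow> M a b = 0)"

lemma mat_mult_idm_left_pt:
  assumes fin: "finite P" and s: "supp P B"
  shows "mat_mult P (idm P) B a b = B a b"
proof (cases "a \<in> P")
  case True
  have "(\<Sum>c\<in>P. idm P a c * B c b) = (\<Sum>c\<in>P. if a = c then B a b else 0)"
    using True by (intro sum.cong) (auto simp: idm_def)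
  also have "\<dots> = B a b" using True fin by simp
  finally show ?thesis by (simp add: mat_mult_def)
next
  case False
  have "B a b = 0" using False s by (simp add: supp_def)
  moreover have "\<And>c. idm P a c = 0" using False by (simp add: idm_def)
  ultimately show ?thesis by (simp add: mat_mult_def)
qed

lemma mat_mult_idm_right_pt:
  assumes fin: "finite P" and s: "supp P B"
  shows "mat_mult P B (idm P) a b = B a b"
proof (cases "b \<in> P")
  case True
  have "(\<Sum>c\<in>P. B a c * idm P c b) = (\<Sum>c\<in>P. if c = b then B a b else 0)"
    using True by (intro sum.cong) (auto simp: idm_def)
  also have "\<dots> = B a b" using True fin by simp
  finally show ?thesis by (simp add: mat_mult_def)
next
  case False
  have "B a b = 0" using False s by (simp add: supp_def)
  moreover have "\<And>c. idm P c b = 0" using False by (auto simp: idm_def)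
  ultimately show ?thesis by (simp add: mat_mult_def)
qed

lemma mat_mult_idm_left: assumes "finite P" "supp P B" shows "mat_mult P (idm P) B = B"
proof (intro ext)
  fix a b show "mat_mult P (idm P) B a b = B a b" by (rule mat_mult_idm_left_pt[OF assms])
qed

lemma mat_mult_idm_right: assumes "finite P" "supp P B" shows "mat_mult P B (idm P) = B"
proof (intro ext)
  fix a b show "mat_mult P B (idm P) a b = B a b" by (rule mat_mult_idm_right_pt[OF assms])
qed

lemma supp_mult: "supp P A \<Longrightarrow> supp P B \<Longrightarrow> supp P (mat_mult P A B)"
  unfolding supp_def mat_mult_def by auto

lemma supp_idm: "supp P (idm P)" unfolding supp_def idm_def by auto

lemma supp_mpw: "supp P E \<Longrightarrow> supp P (mpw P E k)"
  by (induction k) (auto intro: supp_mult supp_idm)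

lemma mpw_add: assumes fin: "finite P" and s: "supp P E"
  shows "mat_mult P (mpw P E i) (mpw P E j) = mpw P E (i + j)"
proof (induction i)
  case 0 show ?case using mat_mult_idm_left[OF fin supp_mpw[OF s]] by simp
next
  case (Suc i)
  have "mat_mult P (mpw P E (Suc i)) (mpw P E j) = mat_mult P E (mat_mult P (mpw P E i) (mpw P E j))"
    using mat_mult_assoc[OF fin] by simp
  also have "\<dots> = mpw P E (Suc i + j)" using Suc by simp
  finally show ?case .
qed

lemma mpw_one: "finite P \<Longrightarrow> supp P E \<Longrightarrow> mpw P E 1 = E"
  by (simp add: mat_mult_idm_right)

lemma mpw_Suc': assumes "finite P" "supp P E" shows "mpw P E (Suc k) = mat_mult P (mpw P E k) E"
proof -
  have h: "mat_mult P (mpw P E k) (mpw P E 1) = mpw P E (k+1)" by (rule mpw_add[OF assms])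
  have "mpw P E 1 = E" by (rule mpw_one[OF assms])
  with h show ?thesis by (simp only: Suc_eq_plus1)
qed

lemma mpw_sym:
  assumes "finite P" "supp P E" "\<And>a b. E a b = E b a"
  shows "mpw P E k a b = mpw P E k b a"
proof (induction k arbitrary: a b)
  case 0 show ?case by (auto simp: idm_def)
next
  case (Suc k)
  have "mpw P E (Suc k) b a = (\<Sum>c\<in>P. mpw P E k b c * E c a)"
    using mpw_Suc'[OF assms(1,2)] by (simp add: mat_mult_def)
  also have "\<dots> = (\<Sum>c\<in>P. E a c * mpw P E k c b)"
    using Suc assms(3) by (simp add: mult.commute)
  finally show ?case by (simp add: mat_mult_def)
qed

lemma mpw_rows:
  assumes "finite P" "supp P E" "\<And>a. (\<Sum>b\<in>P. \<bar>E a b\<bar>) \<le> x" "0 \<le> x"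
  shows "(\<Sum>b\<in>P. \<bar>mpw P E k a b\<bar>) \<le> x ^ k"
proof (induction k arbitrary: a)
  case 0
  show ?case
  proof (cases "a \<in> P")
    case True
    have "(\<Sum>b\<in>P. \<bar>mpw P E 0 a b\<bar>) = (\<Sum>b\<in>P. if a = b then 1 else 0)"
      using True by (intro sum.cong) (auto simp: idm_def)
    then show ?thesis using True assms(1) by simp
  next
    case False then show ?thesis by (simp add: idm_def)
  qed
next
  case (Suc k)
  have "(\<Sum>b\<in>P. \<bar>mpw P E (Suc k) a b\<bar>) \<le> (\<Sum>b\<in>P. \<Sum>c\<in>P. \<bar>E a c\<bar> * \<bar>mpw P E k c b\<bar>)"
    by (auto simp: mat_mult_def abs_mult intro!: sum_mono order_trans[OF sum_abs])
  also have "\<dots> = (\<Sum>c\<in>P. \<bar>E a c\<bar> * (\<Sum>b\<in>P. \<bar>mpw P E k c b\<bar>))"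
    by (subst sum.swap) (simp add: sum_distrib_left)
  also have "\<dots> \<le> (\<Sum>c\<in>P. \<bar>E a c\<bar> * x ^ k)"
    by (intro sum_mono mult_left_mono Suc) auto
  also have "\<dots> \<le> x * x ^ k"
    using assms(3)[of a] assms(4) by (simp add: sum_distrib_right[symmetric] mult_right_mono)
  finally show ?case by simp
qed

lemma entry_le_row:
  assumes "finite P" "supp P M" "(\<Sum>b\<in>P. \<bar>M a b\<bar>) \<le> r"
  shows "\<bar>M a b\<bar> \<le> r"
proof (cases "b \<in> P")
  case True
  have "\<bar>M a b\<bar> \<le> (\<Sum>b\<in>P. \<bar>M a b\<bar>)"
    using True assms(1) by (intro member_le_sum) auto
  then show ?thesis using assms(3) by simp
next
  case False
  then have "M a b = 0" using assms(2) by (auto simp: supp_def)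
  moreover have "0 \<le> (\<Sum>b\<in>P. \<bar>M a b\<bar>)" by (simp add: sum_nonneg)
  then have "0 \<le> r" using assms(3) by linarith
  ultimately show ?thesis by simp
qed

lemma quad_bound:
  fixes M :: "'i mat" and v :: "'i \<Rightarrow> real"
  assumes "finite P" "\<And>a b. M a b = M b a" "\<And>a. (\<Sum>b\<in>P. \<bar>M a b\<bar>) \<le> r"
  shows "\<bar>\<Sum>a\<in>P. \<Sum>b\<in>P. v a * M a b * v b\<bar> \<le> r * (\<Sum>a\<in>P. (v a)^2)"
proof -
  have pw: "\<bar>v a * M a b * v b\<bar> \<le> \<bar>M a b\<bar> * (v a)^2 / 2 + \<bar>M a b\<bar> * (v b)^2 / 2" for a b
  proof -
    have "2 * \<bar>v a\<bar> * \<bar>v b\<bar> \<le> (v a)^2 + (v b)^2"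
      using sum_squares_ge_zero[of "\<bar>v a\<bar> - \<bar>v b\<bar>" 0]
      by (simp add: power2_eq_square algebra_simps)
    then have "\<bar>M a b\<bar> * (2 * \<bar>v a\<bar> * \<bar>v b\<bar>) \<le> \<bar>M a b\<bar> * ((v a)^2 + (v b)^2)"
      by (rule mult_left_mono) simp
    then show ?thesis by (simp add: abs_mult algebra_simps)
  qed
  have "\<bar>\<Sum>a\<in>P. \<Sum>b\<in>P. v a * M a b * v b\<bar> \<le> (\<Sum>a\<in>P. \<Sum>b\<in>P. \<bar>M a b\<bar> * (v a)^2 / 2 + \<bar>M a b\<bar> * (v b)^2 / 2)"
    using pw by (intro order_trans[OF sum_abs] sum_mono order_trans[OF sum_abs]) auto
  also have "\<dots> = (\<Sum>a\<in>P. \<Sum>b\<in>P. \<bar>M a b\<bar> * (v a)^2) / 2 + (\<Sum>a\<in>P. \<Sum>b\<in>P. \<bar>M a b\<bar> * (v b)^2) / 2"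
    by (simp only: sum.distrib sum_divide_distrib)
  finally have calc: "\<bar>\<Sum>a\<in>P. \<Sum>b\<in>P. v a * M a b * v b\<bar> \<le> (\<Sum>a\<in>P. \<Sum>b\<in>P. \<bar>M a b\<bar> * (v a)^2) / 2 + (\<Sum>a\<in>P. \<Sum>b\<in>P. \<bar>M a b\<bar> * (v b)^2) / 2" .
  have s1: "(\<Sum>a\<in>P. \<Sum>b\<in>P. \<bar>M a b\<bar> * (v a)^2) = (\<Sum>a\<in>P. (v a)^2 * (\<Sum>b\<in>P. \<bar>M a b\<bar>))"
    by (simp add: sum_distrib_left mult.commute)
  have s2: "(\<Sum>a\<in>P. \<Sum>b\<in>P. \<bar>M a b\<bar> * (v b)^2) = (\<Sum>b\<in>P. (v b)^2 * (\<Sum>a\<in>P. \<bar>M b a\<bar>))"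
    by (subst sum.swap) (simp add: sum_distrib_left mult.commute assms(2))
  have t1: "(\<Sum>a\<in>P. (v a)^2 * (\<Sum>b\<in>P. \<bar>M a b\<bar>)) \<le> (\<Sum>a\<in>P. (v a)^2 * r)"
    using assms(3) by (intro sum_mono mult_left_mono) auto
  have t2: "(\<Sum>b\<in>P. (v b)^2 * (\<Sum>a\<in>P. \<bar>M b a\<bar>)) \<le> (\<Sum>b\<in>P. (v b)^2 * r)"
    using assms(3) by (intro sum_mono mult_left_mono) auto
  have "(\<Sum>a\<in>P. (v a)^2 * r) = r * (\<Sum>a\<in>P. (v a)^2)" by (simp add: sum_distrib_left mult.commute)
  then show ?thesis using calc s1 s2 t1 t2 by linarith
qed

definition cf :: "nat \<Rightarrow> real" where "cf k = (-1/2) gchoose k"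

lemma cf_Suc: "cf (Suc k) = cf k * (-1/2 - real k) / (real k + 1)"
proof -
  have "fact (Suc k) * cf (Suc k) = fact k * cf k * (-1/2 - real k)"
    unfolding cf_def gbinomial_mult_fact by simp
  then have "fact k * ((real k + 1) * cf (Suc k)) = fact k * (cf k * (-1/2 - real k))"
    by (simp add: algebra_simps)
  then have "(real k + 1) * cf (Suc k) = cf k * (-1/2 - real k)" by simp
  then show ?thesis by (simp add: field_simps)
qed

lemma cf_le: "\<bar>cf k\<bar> \<le> 1"
proof (induction k)
  case 0 show ?case by (simp add: cf_def)
next
  case (Suc k)
  have "\<bar>(-1/2 - real k) / (real k + 1)\<bar> \<le> 1" by (simp add: abs_if field_simps)
  then have "\<bar>cf k\<bar> * \<bar>(-1/2 - real k) / (real k + 1)\<bar> \<le> 1 * 1"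
    using Suc by (intro mult_mono) auto
  then show ?case unfolding cf_Suc by (simp add: abs_mult abs_divide)
qed

lemma cf_conv: "(\<Sum>i\<le>k. cf i * cf (k - i)) = (-1) ^ k"
proof -
  have "(\<Sum>i\<le>k. cf i * cf (k - i)) = ((-1/2) + (-1/2) :: real) gchoose k"
    unfolding cf_def using gbinomial_Vandermonde[of "-1/2::real" "-1/2" k]
    by (simp add: atLeast0AtMost)
  also have "\<dots> = (-1::real) gchoose k" by simp
  also have "\<dots> = (-1)^k * ((1 + real k - 1) gchoose k)" by (rule gbinomial_minus)
  also have "(1 + real k - 1) gchoose k = 1"
    using binomial_gbinomial[of k k, where 'a=real] by simp
  finally show ?thesis by simp
qed


lemma abs_suminf_le:
  fixes f g :: "nat \<Rightarrow> real"
  assumes "\<And>n. \<bar>f n\<bar> \<le> g n" "summable g"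
  shows "\<bar>suminf f\<bar> \<le> suminf g" "summable f"
proof -
  show sf: "summable f" by (rule summable_comparison_test'[OF assms(2)]) (use assms(1) in auto)
  have "suminf f \<le> suminf g" using assms(1) by (intro suminf_le sf assms(2)) (auto simp: abs_le_iff)
  moreover have "suminf (\<lambda>n. - f n) \<le> suminf g"
    using assms(1) by (intro suminf_le summable_minus sf assms(2)) (auto simp: abs_le_iff)
  then have "- suminf f \<le> suminf g" using suminf_minus[OF sf] by simp
  ultimately show "\<bar>suminf f\<bar> \<le> suminf g" by simp
qed

lemma geom4: "summable (\<lambda>k. (1/4::real)^k)" "(\<Sum>k. (1/4::real)^Suc k) = 1/3"
  "summable (\<lambda>k. (1/4::real)^Suc k)"
proof -
  show s: "summable (\<lambda>k. (1/4::real)^k)" by (rule summable_geometric) simp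
  have "(\<lambda>k. (1/4::real)^k) sums (1/(1 - 1/4))" by (rule geometric_sums) simp
  then have "(\<lambda>k. 1/4 * (1/4::real)^k) sums (1/4 * (1/(1 - 1/4)))" by (rule sums_mult)
  then have "(\<lambda>k. (1/4::real)^Suc k) sums (1/3)" by simp
  then show "(\<Sum>k. (1/4::real)^Suc k) = 1/3" "summable (\<lambda>k. (1/4::real)^Suc k)"
    by (auto simp: sums_iff)
qed

lemma pos_def_nonneg:
  assumes "pos_def P R" "finite P"
  shows "0 \<le> (\<Sum>a\<in>P. \<Sum>b\<in>P. v a * R a b * v b)"
proof (cases "\<exists>a\<in>P. v a \<noteq> 0")
  case True then show ?thesis using assms(1) unfolding pos_def_def by (auto intro: less_imp_le)
next
  case False then show ?thesis by simp
qed

context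
  fixes P :: "'i set" and A :: "'i mat"
  assumes finP: "finite P" and symA: "\<And>a b. a \<in> P \<Longrightarrow> b \<in> P \<Longrightarrow> A a b = A b a"
    and rowA: "\<And>a. a \<in> P \<Longrightarrow> (\<Sum>b\<in>P. \<bar>A a b - (if a = b then 1 else 0)\<bar>) \<le> 1/4"
begin

definition EE :: "'i mat" where
  "EE = (\<lambda>a b. if a \<in> P \<and> b \<in> P then A a b - (if a = b then 1 else 0) else 0)"

lemma suppE: "supp P EE" by (simp add: supp_def EE_def)

lemma symE: "EE a b = EE b a" using symA by (auto simp: EE_def)

lemma rowE: "(\<Sum>b\<in>P. \<bar>EE a b\<bar>) \<le> 1/4"
proof (cases "a \<in> P")
  case True
  have "(\<Sum>b\<in>P. \<bar>EE a b\<bar>) = (\<Sum>b\<in>P. \<bar>A a b - (if a = b then 1 else 0)\<bar>)"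
    using True by (intro sum.cong) (auto simp: EE_def)
  then show ?thesis using rowA[OF True] by simp
next
  case False then show ?thesis by (simp add: EE_def)
qed

lemma A_split: "a \<in> P \<Longrightarrow> b \<in> P \<Longrightarrow> A a b = idm P a b + EE a b"
  by (simp add: EE_def idm_def)

abbreviation MM where "MM \<equiv> mpw P EE"

lemma rowM: "(\<Sum>b\<in>P. \<bar>MM k a b\<bar>) \<le> (1/4)^k"
  by (rule mpw_rows[OF finP suppE rowE]) simp

lemma entM: "\<bar>MM k a b\<bar> \<le> (1/4)^k"
  by (rule entry_le_row[OF finP supp_mpw[OF suppE] rowM])

lemma symM: "MM k a b = MM k b a" by (rule mpw_sym[OF finP suppE symE])

lemma term_bound: "\<bar>cf k * MM k a b\<bar> \<le> (1/4)^k"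
proof -
  have "\<bar>cf k\<bar> * \<bar>MM k a b\<bar> \<le> 1 * (1/4)^k"
    using cf_le[of k] entM[of k a b] by (intro mult_mono) auto
  then show ?thesis by (simp add: abs_mult)
qed

definition TT :: "'i mat" where "TT a b = (\<Sum>k. cf k * MM k a b)"

lemma summT: "summable (\<lambda>k. cf k * MM k a b)"
  using abs_suminf_le(2)[OF term_bound geom4(1)] .

lemma summT_norm: "summable (\<lambda>k. norm (cf k * MM k a b))"
  using term_bound by (intro summable_comparison_test'[OF geom4(1)]) auto

lemma TT_close: "\<bar>TT a b - idm P a b\<bar> \<le> 1/3"
proof -
  have "TT a b = cf 0 * MM 0 a b + (\<Sum>k. cf (Suc k) * MM (Suc k) a b)"
    unfolding TT_def using suminf_split_head[OF summT[of a b]] by simp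
  then have "TT a b - idm P a b = (\<Sum>k. cf (Suc k) * MM (Suc k) a b)"
    by (simp add: cf_def)
  also have "\<bar>\<dots>\<bar> \<le> (\<Sum>k. (1/4::real)^Suc k)"
    by (rule abs_suminf_le(1)[OF term_bound geom4(3)])
  finally show ?thesis using geom4(2) by simp
qed

lemma suppT: "supp P TT"
proof -
  have "a \<notin> P \<or> b \<notin> P \<Longrightarrow> TT a b = 0" for a b
    using supp_mpw[OF suppE] unfolding TT_def supp_def by simp
  then show ?thesis by (simp add: supp_def)
qed

lemma symT: "TT a b = TT b a" unfolding TT_def using symM by simp


lemma posT: "pos_def P TT"
  unfolding pos_def_def
proof (intro conjI ballI allI impI)
  show "TT a b = TT b a" for a b by (rule symT)
next
  fix v :: "'i \<Rightarrow> real" assume ex: "\<exists>a\<in>P. v a \<noteq> 0"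
  define q where "q k = (\<Sum>a\<in>P. \<Sum>b\<in>P. v a * MM k a b * v b)" for k
  define V where "V = (\<Sum>a\<in>P. (v a)^2)"
  have Vpos: "V > 0"
  proof -
    from ex obtain a where "a \<in> P" "v a \<noteq> 0" by blast
    then show ?thesis unfolding V_def by (intro sum_pos2[where i=a] finP) auto
  qed
  have qb: "\<bar>cf k * q k\<bar> \<le> (1/4)^k * V" for k
  proof -
    have "\<bar>q k\<bar> \<le> (1/4)^k * V" unfolding q_def V_def
      by (rule quad_bound[OF finP symM rowM])
    then have "\<bar>cf k\<bar> * \<bar>q k\<bar> \<le> 1 * ((1/4)^k * V)"
      using cf_le[of k] by (intro mult_mono) auto
    then show ?thesis by (simp add: abs_mult)
  qed
  define h where "h a b k = v a * (cf k * MM k a b) * v b" for a b k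
  have hs: "summable (h a b)" for a b
    unfolding h_def by (intro summable_mult2 summable_mult summT)
  have s1: "v a * TT a b * v b = (\<Sum>k. h a b k)" for a b
    unfolding TT_def h_def
    using suminf_mult[OF summT[of a b], of "v a"] suminf_mult2[OF summable_mult[OF summT[of a b], of "v a"], of "v b"]
    by simp
  have "(\<Sum>a\<in>P. \<Sum>b\<in>P. v a * TT a b * v b) = (\<Sum>a\<in>P. \<Sum>b\<in>P. \<Sum>k. h a b k)"
    by (simp add: s1)
  also have "\<dots> = (\<Sum>a\<in>P. \<Sum>k. \<Sum>b\<in>P. h a b k)"
    by (intro sum.cong refl suminf_sum[symmetric] hs)
  also have "\<dots> = (\<Sum>k. \<Sum>a\<in>P. \<Sum>b\<in>P. h a b k)"
    by (intro suminf_sum[symmetric] summable_sum hs)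
  also have "\<dots> = (\<Sum>k. cf k * q k)"
    unfolding h_def q_def by (simp add: sum_distrib_left mult_ac)
  finally have Qe: "(\<Sum>a\<in>P. \<Sum>b\<in>P. v a * TT a b * v b) = (\<Sum>k. cf k * q k)" .
  have gs: "summable (\<lambda>k. (1/4::real)^Suc k * V)" by (intro summable_mult2 geom4(3))
  have cqs: "summable (\<lambda>k. cf k * q k)"
    by (rule abs_suminf_le(2)[OF qb summable_mult2[OF geom4(1)]])
  have q0: "q 0 = V"
  proof -
    have "q 0 = (\<Sum>a\<in>P. \<Sum>b\<in>P. if a = b then v a * v b else 0)"
      unfolding q_def by (intro sum.cong refl) (auto simp: idm_def)
    also have "\<dots> = V" unfolding V_def using finP by (simp add: power2_eq_square)
    finally show ?thesis .
  qed
  have "(\<Sum>k. cf k * q k) = cf 0 * q 0 + (\<Sum>k. cf (Suc k) * q (Suc k))"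
    using suminf_split_head[OF cqs] by simp
  also have "cf 0 * q 0 = V" using q0 by (simp add: cf_def)
  finally have Qs: "(\<Sum>k. cf k * q k) = V + (\<Sum>k. cf (Suc k) * q (Suc k))" .
  have "\<bar>\<Sum>k. cf (Suc k) * q (Suc k)\<bar> \<le> (\<Sum>k. (1/4::real)^Suc k * V)"
    by (rule abs_suminf_le(1)[OF qb gs])
  also have "\<dots> = (\<Sum>k. (1/4::real)^Suc k) * V" by (rule suminf_mult2[OF geom4(3), symmetric])
  also have "\<dots> = V / 3" unfolding geom4(2) by simp
  finally have "\<bar>\<Sum>k. cf (Suc k) * q (Suc k)\<bar> \<le> V / 3" .
  then show "0 < (\<Sum>a\<in>P. \<Sum>b\<in>P. v a * TT a b * v b)" using Qe Qs Vpos by linarith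
qed

lemma TT2: "mat_mult P TT TT a c = (\<Sum>k. (-1)^k * MM k a c)"
proof -
  define g where "g d k = (\<Sum>i\<le>k. (cf i * MM i a d) * (cf (k-i) * MM (k-i) d c))" for d k
  have gsum: "g d sums (TT a d * TT d c)" for d
    unfolding g_def TT_def by (rule Cauchy_product_sums[OF summT_norm[of a d] summT_norm[of d c]])
  have gs: "summable (g d)" for d using gsum[of d] by (rule sums_summable)
  have "mat_mult P TT TT a c = (\<Sum>d\<in>P. TT a d * TT d c)" by (simp add: mat_mult_def)
  also have "\<dots> = (\<Sum>d\<in>P. \<Sum>k. g d k)"
    by (intro sum.cong refl sums_unique gsum)
  also have "\<dots> = (\<Sum>k. \<Sum>d\<in>P. g d k)"
    by (intro suminf_sum[symmetric] gs)
  also have "\<dots> = (\<Sum>k. (-1)^k * MM k a c)"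
  proof (intro suminf_cong)
    fix k
    have "(\<Sum>d\<in>P. g d k) = (\<Sum>i\<le>k. \<Sum>d\<in>P. (cf i * MM i a d) * (cf (k-i) * MM (k-i) d c))"
      unfolding g_def by (rule sum.swap)
    also have "\<dots> = (\<Sum>i\<le>k. cf i * cf (k-i) * (\<Sum>d\<in>P. MM i a d * MM (k-i) d c))"
      unfolding sum_distrib_left by (intro sum.cong refl) (simp only: mult_ac)
    also have "\<dots> = (\<Sum>i\<le>k. cf i * cf (k-i) * MM k a c)"
    proof (intro sum.cong refl)
      fix i assume "i \<in> {..k}"
      then have "i + (k - i) = k" by simp
      have "mat_mult P (MM i) (MM (k-i)) a c = MM (i + (k-i)) a c"
        by (simp only: mpw_add[OF finP suppE])
      then have "(\<Sum>d\<in>P. MM i a d * MM (k-i) d c) = MM (i + (k-i)) a c"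
        by (simp only: mat_mult_def)
      then have "(\<Sum>d\<in>P. MM i a d * MM (k-i) d c) = MM k a c"
        using \<open>i + (k - i) = k\<close> by simp
      then show "cf i * cf (k-i) * (\<Sum>d\<in>P. MM i a d * MM (k-i) d c) = cf i * cf (k-i) * MM k a c"
        by simp
    qed
    also have "\<dots> = (\<Sum>i\<le>k. cf i * cf (k-i)) * MM k a c" by (simp add: sum_distrib_right)
    also have "\<dots> = (-1)^k * MM k a c" by (simp add: cf_conv)
    finally show "(\<Sum>d\<in>P. g d k) = (-1)^k * MM k a c" .
  qed
  finally show ?thesis .
qed

lemma altM_summable: "summable (\<lambda>k. (-1)^k * MM k a b)"
  by (rule abs_suminf_le(2)[OF _ geom4(1)]) (simp add: abs_mult entM)

lemma identT: "is_identity P (mat_mult P (mat_mult P TT TT) A)"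
  unfolding is_identity_def
proof (intro ballI)
  fix a b assume a: "a \<in> P" and b: "b \<in> P"
  define g where "g k = (-1)^k * MM k a b" for k
  have sg: "summable g" unfolding g_def by (rule altM_summable)
  have eb: "\<bar>(-1)^k * MM (Suc k) a b\<bar> \<le> (1/4)^k" for k
  proof -
    have "(1/4::real)^Suc k \<le> (1/4)^k" by (rule power_decreasing) auto
    then show ?thesis using entM[of "Suc k" a b] by (simp add: abs_mult)
  qed
  have sh: "summable (\<lambda>k. (-1)^k * MM (Suc k) a b)"
    by (rule abs_suminf_le(2)[OF eb geom4(1)])
  have "mat_mult P (mat_mult P TT TT) A a b = (\<Sum>c\<in>P. mat_mult P TT TT a c * (idm P c b + EE c b))"
    unfolding mat_mult_def[of P "mat_mult P TT TT"] using b by (intro sum.cong refl) (simp add: A_split)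
  also have "\<dots> = (\<Sum>c\<in>P. mat_mult P TT TT a c * idm P c b) + (\<Sum>c\<in>P. mat_mult P TT TT a c * EE c b)"
    by (simp add: distrib_left sum.distrib)
  also have "(\<Sum>c\<in>P. mat_mult P TT TT a c * idm P c b) = mat_mult P TT TT a b"
  proof -
    have "(\<Sum>c\<in>P. mat_mult P TT TT a c * idm P c b) = (\<Sum>c\<in>P. if c = b then mat_mult P TT TT a b else 0)"
      using b by (intro sum.cong) (auto simp: idm_def)
    then show ?thesis using b finP by simp
  qed
  also have "mat_mult P TT TT a b = suminf g" unfolding g_def by (rule TT2)
  also have "(\<Sum>c\<in>P. mat_mult P TT TT a c * EE c b) = (\<Sum>c\<in>P. \<Sum>k. (-1)^k * MM k a c * EE c b)"
    unfolding TT2 by (intro sum.cong refl suminf_mult2 altM_summable)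
  also have "\<dots> = (\<Sum>k. \<Sum>c\<in>P. (-1)^k * MM k a c * EE c b)"
    by (intro suminf_sum[symmetric] summable_mult2 altM_summable)
  also have "\<dots> = (\<Sum>k. (-1)^k * MM (Suc k) a b)"
  proof (intro suminf_cong)
    fix k
    have "MM (Suc k) a b = (\<Sum>c\<in>P. MM k a c * EE c b)"
      by (simp only: mpw_Suc'[OF finP suppE]) (simp add: mat_mult_def)
    then show "(\<Sum>c\<in>P. (-1)^k * MM k a c * EE c b) = (-1)^k * MM (Suc k) a b"
      by (simp add: sum_distrib_left mult_ac)
  qed
  also have "suminf g = g 0 + (\<Sum>k. g (Suc k))" using suminf_split_head[OF sg] by simp
  also have "g 0 + (\<Sum>k. g (Suc k)) + (\<Sum>k. (-1)^k * MM (Suc k) a b)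
      = g 0 + (\<Sum>k. g (Suc k) + (-1)^k * MM (Suc k) a b)"
    using suminf_add[OF summable_Suc_iff[THEN iffD2, OF sg] sh] by simp
  also have "(\<Sum>k. g (Suc k) + (-1)^k * MM (Suc k) a b) = 0"
    unfolding g_def by simp
  also have "g 0 = (if a = b then 1 else 0)" unfolding g_def using a by (simp add: idm_def)
  finally show "mat_mult P (mat_mult P TT TT) A a b = (if a = b then 1 else 0)" by simp
qed


lemma left_inj:
  assumes w: "\<And>b. b \<in> P \<Longrightarrow> (\<Sum>c\<in>P. w c * A c b) = 0"
  shows "\<forall>c\<in>P. w c = 0"
proof -
  have wb: "\<bar>w b\<bar> \<le> (\<Sum>c\<in>P. \<bar>w c\<bar> * \<bar>EE c b\<bar>)" if b: "b \<in> P" for b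
  proof -
    have "(\<Sum>c\<in>P. w c * A c b) = (\<Sum>c\<in>P. w c * idm P c b) + (\<Sum>c\<in>P. w c * EE c b)"
      using b by (simp add: A_split distrib_left sum.distrib)
    also have "(\<Sum>c\<in>P. w c * idm P c b) = w b"
    proof -
      have "(\<Sum>c\<in>P. w c * idm P c b) = (\<Sum>c\<in>P. if c = b then w b else 0)"
        using b by (intro sum.cong) (auto simp: idm_def)
      then show ?thesis using b finP by simp
    qed
    finally have "w b = - (\<Sum>c\<in>P. w c * EE c b)" using w[OF b] by simp
    then have "\<bar>w b\<bar> = \<bar>\<Sum>c\<in>P. w c * EE c b\<bar>" by simp
    also have "\<dots> \<le> (\<Sum>c\<in>P. \<bar>w c * EE c b\<bar>)" by (rule sum_abs)
    finally show ?thesis by (simp add: abs_mult)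
  qed
  have "(\<Sum>b\<in>P. \<bar>w b\<bar>) \<le> (\<Sum>b\<in>P. \<Sum>c\<in>P. \<bar>w c\<bar> * \<bar>EE c b\<bar>)"
    using wb by (intro sum_mono) auto
  also have "\<dots> = (\<Sum>c\<in>P. \<bar>w c\<bar> * (\<Sum>b\<in>P. \<bar>EE c b\<bar>))"
    by (subst sum.swap) (simp add: sum_distrib_left)
  also have "\<dots> \<le> (\<Sum>c\<in>P. \<bar>w c\<bar> * (1/4))"
    using rowE by (intro sum_mono mult_left_mono) auto
  also have "\<dots> = (\<Sum>c\<in>P. \<bar>w c\<bar>) / 4" by (simp add: sum_divide_distrib)
  finally have "(\<Sum>b\<in>P. \<bar>w b\<bar>) \<le> 0" by (simp add: sum_nonneg)
  then have "(\<Sum>b\<in>P. \<bar>w b\<bar>) = 0" by (simp add: order_antisym sum_nonneg)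
  then show ?thesis using finP by (simp add: sum_nonneg_eq_0_iff)
qed

lemma uniqT:
  assumes sR: "\<forall>a b. (a \<notin> P \<or> b \<notin> P) \<longrightarrow> R a b = 0" and pR: "pos_def P R"
    and iR: "is_identity P (mat_mult P (mat_mult P R R) A)"
  shows "R = TT"
proof -
  have R2: "mat_mult P R R a c = mat_mult P TT TT a c" if a: "a \<in> P" and c: "c \<in> P" for a c
  proof -
    have "\<forall>c\<in>P. mat_mult P R R a c - mat_mult P TT TT a c = 0"
    proof (rule left_inj)
      fix b assume b: "b \<in> P"
      have "(\<Sum>c\<in>P. (mat_mult P R R a c - mat_mult P TT TT a c) * A c b)
          = mat_mult P (mat_mult P R R) A a b - mat_mult P (mat_mult P TT TT) A a b"
        by (simp add: mat_mult_def[of P _ A] left_diff_distrib sum_subtractf)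
      also have "\<dots> = 0" using iR identT a b unfolding is_identity_def by simp
      finally show "(\<Sum>c\<in>P. (mat_mult P R R a c - mat_mult P TT TT a c) * A c b) = 0" .
    qed
    then show ?thesis using c by simp
  qed
  define X where "X a b = R a b - TT a b" for a b
  have key: "(\<Sum>c\<in>P. R a c * X c b) + (\<Sum>c\<in>P. X a c * TT c b) = 0" if "a \<in> P" "b \<in> P" for a b
  proof -
    have "(\<Sum>c\<in>P. R a c * X c b) + (\<Sum>c\<in>P. X a c * TT c b)
        = mat_mult P R R a b - mat_mult P TT TT a b"
      unfolding X_def mat_mult_def by (simp add: algebra_simps sum_subtractf)
    then show ?thesis using R2[OF that] by simp
  qed
  define QR where "QR b = (\<Sum>a\<in>P. \<Sum>c\<in>P. X a b * R a c * X c b)" for b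
  define QT where "QT a = (\<Sum>c\<in>P. \<Sum>b\<in>P. X a c * TT c b * X a b)" for a
  have QR0: "0 \<le> QR b" for b unfolding QR_def by (rule pos_def_nonneg[OF pR finP])
  have QT0: "0 \<le> QT a" for a unfolding QT_def by (rule pos_def_nonneg[OF posT finP])
  have "0 = (\<Sum>a\<in>P. \<Sum>b\<in>P. X a b * ((\<Sum>c\<in>P. R a c * X c b) + (\<Sum>c\<in>P. X a c * TT c b)))"
    using key by simp
  also have "\<dots> = (\<Sum>a\<in>P. \<Sum>b\<in>P. \<Sum>c\<in>P. X a b * R a c * X c b) + (\<Sum>a\<in>P. \<Sum>b\<in>P. \<Sum>c\<in>P. X a c * TT c b * X a b)"
    by (simp add: distrib_left sum.distrib sum_distrib_left mult_ac)
  also have "(\<Sum>a\<in>P. \<Sum>b\<in>P. \<Sum>c\<in>P. X a b * R a c * X c b) = (\<Sum>b\<in>P. QR b)"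
    unfolding QR_def by (rule sum.swap)
  also have "(\<Sum>a\<in>P. \<Sum>b\<in>P. \<Sum>c\<in>P. X a c * TT c b * X a b) = (\<Sum>a\<in>P. QT a)"
    unfolding QT_def by (intro sum.cong refl sum.swap)
  finally have z: "(\<Sum>b\<in>P. QR b) + (\<Sum>a\<in>P. QT a) = 0" by simp
  have "(\<Sum>b\<in>P. QR b) = 0"
  proof -
    have "0 \<le> (\<Sum>b\<in>P. QR b)" by (simp add: sum_nonneg QR0)
    moreover have "0 \<le> (\<Sum>a\<in>P. QT a)" by (simp add: sum_nonneg QT0)
    ultimately show ?thesis using z by linarith
  qed
  then have QRz: "\<forall>b\<in>P. QR b = 0" using finP QR0 by (simp add: sum_nonneg_eq_0_iff)
  have Xz: "X a b = 0" if "a \<in> P" "b \<in> P" for a b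
  proof (rule ccontr)
    assume "X a b \<noteq> 0"
    then have "\<exists>a\<in>P. X a b \<noteq> 0" using that by blast
    moreover have "\<forall>v. (\<exists>a\<in>P. v a \<noteq> 0) \<longrightarrow> 0 < (\<Sum>a\<in>P. \<Sum>c\<in>P. v a * R a c * v c)"
      using pR unfolding pos_def_def by blast
    ultimately have "0 < QR b" unfolding QR_def
      using spec[of _ "\<lambda>a. X a b"] by blast
    then show False using QRz that by simp
  qed
  show ?thesis
  proof (intro ext)
    fix a b show "R a b = TT a b"
    proof (cases "a \<in> P \<and> b \<in> P")
      case True then show ?thesis using Xz[of a b] by (simp add: X_def)
    next
      case False then show ?thesis using sR suppT by (auto simp: supp_def)
    qed
  qed
qed

lemma inv_sqrt_eq: "inv_sqrt P A = TT"
  unfolding inv_sqrt_def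
proof (rule the_equality)
  show "(\<forall>a b. a \<notin> P \<or> b \<notin> P \<longrightarrow> TT a b = 0) \<and> pos_def P TT \<and> is_identity P (mat_mult P (mat_mult P TT TT) A)"
    using suppT posT identT by (auto simp: supp_def)
next
  fix R assume "(\<forall>a b. a \<notin> P \<or> b \<notin> P \<longrightarrow> R a b = 0) \<and> pos_def P R \<and> is_identity P (mat_mult P (mat_mult P R R) A)"
  then show "R = TT" using uniqT by blast
qed

lemma inv_sqrt_close: "a \<in> P \<Longrightarrow> b \<in> P \<Longrightarrow> \<bar>inv_sqrt P A a b - (if a = b then 1 else 0)\<bar> \<le> 1/3"
  using TT_close[of a b] unfolding inv_sqrt_eq by (simp add: idm_def)

end


lemma exp_bounds: "exp (-2::real) + exp (-3) \<le> 1/4"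
proof -
  have e1: "5/2 \<le> exp (1::real)" using exp_lower_Taylor_quadratic[of 1] by simp
  have e2: "exp (2::real) = exp 1 * exp 1" by (simp add: exp_add[symmetric])
  have e3: "exp (3::real) = exp 1 * exp 1 * exp 1" by (simp add: exp_add[symmetric])
  have "25/4 \<le> exp (2::real)" unfolding e2 using e1 mult_mono[OF e1 e1] by simp
  then have a: "exp (-2::real) \<le> 4/25" by (simp add: exp_minus field_simps)
  have "125/8 \<le> exp (3::real)" unfolding e3
    using mult_mono[OF mult_mono[OF e1 e1] e1] by simp
  then have b: "exp (-3::real) \<le> 8/125" by (simp add: exp_minus field_simps)
  show ?thesis using a b by simp
qed

lemma max_abs_le:
  assumes "finite P" "P \<noteq> {}" "\<And>a b. a \<in> P \<Longrightarrow> b \<in> P \<Longrightarrow> \<bar>M a b\<bar> \<le> c"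
  shows "max_abs P M \<le> c"
proof -
  have eq: "{\<bar>M a b\<bar> | a b. a \<in> P \<and> b \<in> P} = (\<lambda>(a,b). \<bar>M a b\<bar>) ` (P \<times> P)" by auto
  show ?thesis unfolding max_abs_def eq
    using assms by (intro Max.boundedI) auto
qed

lemma max_abs_ge:
  assumes "finite P" "a \<in> P" "b \<in> P"
  shows "\<bar>M a b\<bar> \<le> max_abs P M"
proof -
  have eq: "{\<bar>M a b\<bar> | a b. a \<in> P \<and> b \<in> P} = (\<lambda>(a,b). \<bar>M a b\<bar>) ` (P \<times> P)" by auto
  show ?thesis unfolding max_abs_def eq
    using assms by (intro Max_ge) auto
qed

lemma overlap_form:
  assumes "0 < \<alpha>" "\<alpha> \<le> \<beta>" and zd: "\<zeta> = (\<lambda>a::nat\<times>nat. if snd a = 0 then \<beta> else \<alpha>)"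
  shows "overlap \<alpha> \<beta> x a b = (4*\<zeta> a*\<zeta> b/(\<zeta> a+\<zeta> b)^2) powr (3/4) *
            exp (-(\<zeta> a*\<zeta> b/(\<zeta> a+\<zeta> b)) * (dist (x a) (x b))^2)"
proof -
  have zp: "0 < \<zeta> c" for c using assms by (simp add: zd)
  have orb: "orbital \<alpha> \<beta> x c r = gauss (\<zeta> c) (r - x c)" for c r
    by (simp add: orbital_def zd)
  show ?thesis unfolding overlap_def orb
    using overlap3[OF zp[of a] zp[of b], of "x a" "x b"] Qeq[OF zp[of a] zp[of b]] by simp
qed

lemma overlap_facts:
  assumes "0 < \<alpha>" "\<alpha> \<le> \<beta>"
  shows "overlap \<alpha> \<beta> x a a = 1"
    and "overlap \<alpha> \<beta> x a b = overlap \<alpha> \<beta> x b a"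
    and "0 \<le> overlap \<alpha> \<beta> x a b"
    and "overlap \<alpha> \<beta> x a b \<le> exp (-(\<alpha>/2) * (dist (x a) (x b))^2)"
proof -
  define \<zeta> where "\<zeta> = (\<lambda>a::nat\<times>nat. if snd a = 0 then \<beta> else \<alpha>)"
  have zp: "0 < \<zeta> c" "\<alpha> \<le> \<zeta> c" for c using assms by (auto simp: \<zeta>_def)
  note F = overlap_form[OF assms \<zeta>_def, of x]
  have q: "4*\<zeta> a*\<zeta> a/(\<zeta> a+\<zeta> a)^2 = 1" using zp(1)[of a] by (simp add: power2_eq_square)
  show "overlap \<alpha> \<beta> x a a = 1" unfolding F q by simp
  show "overlap \<alpha> \<beta> x a b = overlap \<alpha> \<beta> x b a"
    unfolding overlap_def by (simp add: mult.commute)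
  define Q where "Q = (4*\<zeta> a*\<zeta> b/(\<zeta> a+\<zeta> b)^2) powr (3/4)"
  define Ex where "Ex = exp (-(\<zeta> a*\<zeta> b/(\<zeta> a+\<zeta> b)) * (dist (x a) (x b))^2)"
  have Fab: "overlap \<alpha> \<beta> x a b = Q * Ex" unfolding F Q_def Ex_def ..
  have Q0: "0 \<le> Q" "Q \<le> 1" unfolding Q_def using Qle[OF zp(1) zp(1)] by auto
  have E0: "0 \<le> Ex" unfolding Ex_def by simp
  show "0 \<le> overlap \<alpha> \<beta> x a b" unfolding Fab using Q0 E0 by simp
  have h: "\<alpha>/2 \<le> \<zeta> a*\<zeta> b/(\<zeta> a+\<zeta> b)" by (rule hge[OF assms(1) zp(2) zp(2)])
  have "Ex \<le> exp (-(\<alpha>/2) * (dist (x a) (x b))^2)"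
    unfolding Ex_def
  proof (intro exp_mono)
    have "(\<alpha>/2) * (dist (x a) (x b))^2 \<le> (\<zeta> a*\<zeta> b/(\<zeta> a+\<zeta> b)) * (dist (x a) (x b))^2"
      using h by (rule mult_right_mono) simp
    then show "-(\<zeta> a*\<zeta> b/(\<zeta> a+\<zeta> b)) * (dist (x a) (x b))^2 \<le> -(\<alpha>/2) * (dist (x a) (x b))^2"
      by (simp only: mult_minus_left neg_le_iff_le)
  qed
  moreover have "Q * Ex \<le> 1 * Ex" using Q0 E0 by (intro mult_right_mono) auto
  ultimately show "overlap \<alpha> \<beta> x a b \<le> exp (-(\<alpha>/2) * (dist (x a) (x b))^2)"
    unfolding Fab by simp
qed

theorem mainTheorem7:
  fixes n d :: nat
    and E :: "nat set set"
    and \<alpha> \<beta> \<Gamma> :: real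
    and x :: "nat \<times> nat \<Rightarrow> real^3"
    and pt :: "nat \<Rightarrow> nat \<Rightarrow> nat"
    and \<gamma> :: "nat set \<Rightarrow> real"
  defines "P \<equiv> {1..n} \<times> {0..d}"
    and "B \<equiv> (\<lambda>i j. {(i, pt i j), (j, pt j i)})"
    and "S \<equiv> overlap \<alpha> \<beta> x"
    and "\<omega>min \<equiv> Min {\<alpha> * (\<gamma> e)\<^sup>2 | e. e \<in> E}"
  assumes n2: "n \<ge> 2"
    and d1: "1 \<le> d" and dn: "d \<le> n - 1"
    and E_edges: "\<forall>e\<in>E. \<exists>i j. e = {i, j} \<and> i \<noteq> j \<and> i \<in> {1..n} \<and> j \<in> {1..n}"
    and E_ne: "E \<noteq> {}"
    and deg: "\<forall>i\<in>{1..n}. card {j. {i, j} \<in> E} \<le> d"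
    and ab: "0 < \<alpha>" "\<alpha> \<le> \<beta>"
    and Gpos: "0 < \<Gamma>"
    and x_inj: "inj_on x P"
    and edge_pair: "\<forall>i j. {i, j} \<in> E \<longrightarrow> i \<noteq> j \<longrightarrow>
         pt i j \<in> {1..d} \<and> pt j i \<in> {1..d} \<and> 0 < \<gamma> {i, j} \<and> \<gamma> {i, j} < \<Gamma> \<and>
         (\<forall>p\<in>{1..d}. \<forall>q\<in>{1..d}. dist (x (i, p)) (x (j, q)) = \<gamma> {i, j} \<longleftrightarrow> p = pt i j \<and> q = pt j i)"
    and B_disj: "\<forall>i j k l. {i, j} \<in> E \<longrightarrow> {k, l} \<in> E \<longrightarrow> i \<noteq> j \<longrightarrow> k \<noteq> l \<longrightarrow>
         {i, j} \<noteq> {k, l} \<longrightarrow> B i j \<inter> B k l = {}"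
    and far: "\<forall>a\<in>P. \<forall>b\<in>P. a \<noteq> b \<longrightarrow>
         \<not> (\<exists>i j. {i, j} \<in> E \<and> i \<noteq> j \<and> a \<in> B i j \<and> b \<in> B i j) \<longrightarrow> dist (x a) (x b) \<ge> \<Gamma>"
    and hGamma: "\<alpha> * \<Gamma>\<^sup>2 \<ge> 4 * ln (real n) + \<omega>min + 2"
    and hw: "\<omega>min \<ge> 4"
  shows "let Sblock = (\<lambda>a b. if a = b \<or> (\<exists>i j. {i, j} \<in> E \<and> i \<noteq> j \<and> a \<in> B i j \<and> b \<in> B i j)
                             then S a b else 0);
             R = inv_sqrt P S;
             Raprx = inv_sqrt P Sblock;
             Rneg = (\<lambda>a b. R a b - Raprx a b)
         in max_abs P R \<le> max_abs P Raprx + max_abs P Rneg \<and>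
            max_abs P Raprx + max_abs P Rneg \<le> 2"
proof -
  have Pd: "P = {1..n} \<times> {0..d}" using \<open>P \<equiv> {1..n} \<times> {0..d}\<close> by simp
  have Bd: "B = (\<lambda>i j. {(i, pt i j), (j, pt j i)})" using \<open>B \<equiv> (\<lambda>i j. {(i, pt i j), (j, pt j i)})\<close> by simp
  have Sd: "S = overlap \<alpha> \<beta> x" using \<open>S \<equiv> overlap \<alpha> \<beta> x\<close> by simp
  have wd: "\<omega>min = Min {\<alpha> * (\<gamma> e)\<^sup>2 | e. e \<in> E}" using \<open>\<omega>min \<equiv> Min {\<alpha> * (\<gamma> e)\<^sup>2 | e. e \<in> E}\<close> by simp
  have finP: "finite P" by (simp add: Pd)
  have Pne: "P \<noteq> {}" using n2 by (auto simp: Pd)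
  have n0: "0 < real n" using n2 by simp
  have cardP: "real (card P) \<le> (real n)^2"
  proof -
    have "card P = n * (d + 1)" by (simp add: Pd card_cartesian_product)
    moreover have "d + 1 \<le> n" using dn n2 by linarith
    ultimately have "card P \<le> n * n" using mult_le_mono2[of "d+1" n n] by simp
    then have "real (card P) \<le> real (n * n)" by (simp only: of_nat_le_iff)
    then show ?thesis by (simp add: power2_eq_square)
  qed
  define blk where "blk a b \<longleftrightarrow> (\<exists>i j. {i, j} \<in> E \<and> i \<noteq> j \<and> a \<in> B i j \<and> b \<in> B i j)" for a b
  have blk_sym: "blk a b \<Longrightarrow> blk b a" for a b unfolding blk_def by blast
  have finE: "finite E"
  proof (rule finite_subset)
    show "E \<subseteq> Pow {1..n}" using E_edges by auto
  qed simp
  have wle: "\<omega>min \<le> \<alpha> * (\<gamma> {i, j})\<^sup>2" if "{i, j} \<in> E" for i j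
    unfolding wd using that finE by (intro Min_le) (auto intro: finite_image_set)
  have blk_w: "\<omega>min \<le> \<alpha> * (dist (x a) (x b))\<^sup>2" if "blk a b" "a \<noteq> b" for a b
  proof -
    from that(1) obtain i j where ij: "{i, j} \<in> E" "i \<noteq> j" "a \<in> B i j" "b \<in> B i j"
      unfolding blk_def by blast
    from edge_pair ij(1,2) have p: "pt i j \<in> {1..d}" "pt j i \<in> {1..d}"
      and e: "dist (x (i, pt i j)) (x (j, pt j i)) = \<gamma> {i, j}" by auto
    have "dist (x a) (x b) = \<gamma> {i, j}"
      using ij(3,4) that(2) e by (auto simp: Bd dist_commute)
    then show ?thesis using wle[OF ij(1)] by simp
  qed
  have blk_uni: "b = b'" if "blk a b" "blk a b'" "a \<noteq> b" "a \<noteq> b'" for a b b'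
  proof -
    from that(1) obtain i j where ij: "{i, j} \<in> E" "i \<noteq> j" "a \<in> B i j" "b \<in> B i j"
      unfolding blk_def by blast
    from that(2) obtain k l where kl: "{k, l} \<in> E" "k \<noteq> l" "a \<in> B k l" "b' \<in> B k l"
      unfolding blk_def by blast
    have "{i, j} = {k, l}"
    proof (rule ccontr)
      assume "{i, j} \<noteq> {k, l}"
      then have "B i j \<inter> B k l = {}" using B_disj ij(1,2) kl(1,2) by blast
      then show False using ij(3) kl(3) by blast
    qed
    then have "B k l = B i j" by (auto simp: Bd doubleton_eq_iff)
    then show ?thesis using ij(3,4) kl(4) that(3,4) by (auto simp: Bd)
  qed
  have far_d: "\<Gamma> \<le> dist (x a) (x b)" if "a \<in> P" "b \<in> P" "a \<noteq> b" "\<not> blk a b" for a b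
    using far that unfolding blk_def by blast
  note SF = overlap_facts[OF ab, of x, folded Sd]
  have Sblk: "S a b \<le> exp (-2)" if "blk a b" "a \<noteq> b" for a b
  proof -
    have "4 \<le> \<alpha> * (dist (x a) (x b))\<^sup>2" using blk_w[OF that] hw by linarith
    then have "-(\<alpha>/2) * (dist (x a) (x b))\<^sup>2 \<le> -2" by simp
    then have "exp (-(\<alpha>/2) * (dist (x a) (x b))\<^sup>2) \<le> exp (-2)" by (rule exp_mono)
    then show ?thesis by (rule order_trans[OF SF(4)[of a b]])
  qed
  have Sfar: "S a b \<le> exp (-3) / (real n)^2" if "a \<in> P" "b \<in> P" "a \<noteq> b" "\<not> blk a b" for a b
  proof -
    have "\<Gamma>\<^sup>2 \<le> (dist (x a) (x b))\<^sup>2" using far_d[OF that] Gpos by (intro power_mono) auto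
    then have "\<alpha> * \<Gamma>\<^sup>2 \<le> \<alpha> * (dist (x a) (x b))\<^sup>2" using ab(1) by (intro mult_left_mono) auto
    then have "4 * ln (real n) + 6 \<le> \<alpha> * (dist (x a) (x b))\<^sup>2" using hGamma hw by linarith
    then have "-(\<alpha>/2) * (dist (x a) (x b))\<^sup>2 \<le> -3 - 2 * ln (real n)" by simp
    then have "exp (-(\<alpha>/2) * (dist (x a) (x b))\<^sup>2) \<le> exp (-3 - 2 * ln (real n))" by (rule exp_mono)
    then have "S a b \<le> exp (-3 - 2 * ln (real n))" by (rule order_trans[OF SF(4)[of a b]])
    also have "exp (-3 - 2 * ln (real n)) = exp (-3) / (real n)^2"
    proof -
      have l: "2 * ln (real n) = ln ((real n)^2)" using n0 by (simp add: ln_realpow)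
      have n2p: "0 < (real n)^2" using n0 by simp
      have e: "exp (2 * ln (real n)) = (real n)^2" unfolding l using n2p by (rule exp_ln)
      have "exp (-3 - 2 * ln (real n)) = exp (-3) / exp (2 * ln (real n))" by (rule exp_diff)
      then show ?thesis unfolding e .
    qed
    finally show ?thesis .
  qed
  have rowgen: "(\<Sum>b\<in>P. \<bar>M a b - (if a = b then 1 else 0)\<bar>) \<le> 1/4"
    if a: "a \<in> P" and d1: "M a a = 1"
      and bnd: "\<And>b. b \<in> P \<Longrightarrow> b \<noteq> a \<Longrightarrow> 0 \<le> M a b \<and> M a b \<le> (if blk a b then exp (-2) else exp (-3) / (real n)^2)"
    for M :: "nat \<times> nat \<Rightarrow> nat \<times> nat \<Rightarrow> real" and a
  proof -
    define f where "f b = (if b \<noteq> a \<and> blk a b then exp (-2::real) else 0) + exp (-3) / (real n)^2" for b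
    have fb: "\<bar>M a b - (if a = b then 1 else 0)\<bar> \<le> f b" if "b \<in> P" for b
    proof (cases "b = a")
      case True then show ?thesis using d1 by (simp add: f_def)
    next
      case False
      then have "\<bar>M a b - (if a = b then 1 else 0)\<bar> = M a b" using bnd[OF that False] by auto
      also have "\<dots> \<le> f b"
      proof -
        have e3: "0 \<le> exp (-3::real) / (real n)^2" by simp
        show ?thesis
        proof (cases "blk a b")
          case True
          have "f b = exp (-2) + exp (-3) / (real n)^2" by (simp add: f_def True False)
          moreover have "M a b \<le> exp (-2)" using bnd[OF that False] True by simp
          ultimately show ?thesis using e3 by linarith
        next
          case nb: False
          have "f b = exp (-3) / (real n)^2" by (simp add: f_def nb)
          moreover have "M a b \<le> exp (-3) / (real n)^2" using bnd[OF that False] nb by simp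
          ultimately show ?thesis by linarith
        qed
      qed
      finally show ?thesis .
    qed
    have "(\<Sum>b\<in>P. \<bar>M a b - (if a = b then 1 else 0)\<bar>) \<le> (\<Sum>b\<in>P. f b)" using fb by (rule sum_mono)
    also have "\<dots> = (\<Sum>b\<in>P. (if b \<noteq> a \<and> blk a b then exp (-2::real) else 0)) + real (card P) * (exp (-3) / (real n)^2)"
      by (simp add: f_def sum.distrib)
    also have "(\<Sum>b\<in>P. (if b \<noteq> a \<and> blk a b then exp (-2::real) else 0)) = (\<Sum>b\<in>{b\<in>P. b \<noteq> a \<and> blk a b}. exp (-2))"
      by (rule sum.inter_filter[OF finP, symmetric])
    also have "\<dots> = real (card {b\<in>P. b \<noteq> a \<and> blk a b}) * exp (-2)" by simp
    also have "\<dots> \<le> 1 * exp (-2)"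
    proof -
      have "card {b\<in>P. b \<noteq> a \<and> blk a b} \<le> Suc 0"
      proof (subst card_le_Suc0_iff_eq)
        show "finite {b\<in>P. b \<noteq> a \<and> blk a b}" using finP by simp
        show "\<forall>b1\<in>{b\<in>P. b \<noteq> a \<and> blk a b}. \<forall>b2\<in>{b\<in>P. b \<noteq> a \<and> blk a b}. b1 = b2"
        proof (intro ballI)
          fix b1 b2 assume "b1 \<in> {b\<in>P. b \<noteq> a \<and> blk a b}" "b2 \<in> {b\<in>P. b \<noteq> a \<and> blk a b}"
          then have "blk a b1" "blk a b2" "a \<noteq> b1" "a \<noteq> b2" by auto
          then show "b1 = b2" by (rule blk_uni)
        qed
      qed
      then show ?thesis by (intro mult_right_mono) auto
    qed
    also have "real (card P) * (exp (-3) / (real n)^2) \<le> (real n)^2 * (exp (-3) / (real n)^2)"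
      using cardP by (intro mult_right_mono) auto
    also have "(real n)^2 * (exp (-3) / (real n)^2) = exp (-3)" using n0 by simp
    finally show ?thesis using exp_bounds by simp
  qed
  define Sb where "Sb = (\<lambda>a b. if a = b \<or> blk a b then S a b else 0)"
  have SbE: "(\<lambda>a b. if a = b \<or> (\<exists>i j. {i, j} \<in> E \<and> i \<noteq> j \<and> a \<in> B i j \<and> b \<in> B i j) then S a b else 0) = Sb"
    unfolding Sb_def blk_def by simp
  have Srow: "(\<Sum>b\<in>P. \<bar>S a b - (if a = b then 1 else 0)\<bar>) \<le> 1/4" if "a \<in> P" for a
  proof (rule rowgen[OF that SF(1)])
    fix b assume b: "b \<in> P" "b \<noteq> a"
    show "0 \<le> S a b \<and> S a b \<le> (if blk a b then exp (-2) else exp (-3) / (real n)^2)"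
      using SF(3)[of a b] Sblk[of a b] Sfar[OF that b(1)] b(2) by auto
  qed
  have Sbrow: "(\<Sum>b\<in>P. \<bar>Sb a b - (if a = b then 1 else 0)\<bar>) \<le> 1/4" if "a \<in> P" for a
  proof (rule rowgen[OF that])
    show "Sb a a = 1" using SF(1) by (simp add: Sb_def)
    fix b assume b: "b \<in> P" "b \<noteq> a"
    show "0 \<le> Sb a b \<and> Sb a b \<le> (if blk a b then exp (-2) else exp (-3) / (real n)^2)"
      using SF(3)[of a b] Sblk[of a b] b(2) by (auto simp: Sb_def)
  qed
  have Ssym: "S a b = S b a" for a b by (rule SF(2))
  have Sbsym: "Sb a b = Sb b a" for a b using Ssym blk_sym by (auto simp: Sb_def)
  have Rc: "\<bar>inv_sqrt P S a b - (if a = b then 1 else 0)\<bar> \<le> 1/3" if "a \<in> P" "b \<in> P" for a b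
    by (rule inv_sqrt_close[OF finP _ Srow that]) (rule Ssym)
  have Rac: "\<bar>inv_sqrt P Sb a b - (if a = b then 1 else 0)\<bar> \<le> 1/3" if "a \<in> P" "b \<in> P" for a b
    by (rule inv_sqrt_close[OF finP _ Sbrow that]) (rule Sbsym)
  define R where "R = inv_sqrt P S"
  define Ra where "Ra = inv_sqrt P Sb"
  define Rn where "Rn = (\<lambda>a b. R a b - Ra a b)"
  have m1: "max_abs P Ra \<le> 4/3"
  proof (rule max_abs_le[OF finP Pne])
    fix a b assume "a \<in> P" "b \<in> P"
    then have "\<bar>Ra a b - (if a = b then 1 else 0)\<bar> \<le> 1/3" using Rac[of a b] unfolding Ra_def by simp
    moreover have "\<bar>(if a = b then 1 else 0)::real\<bar> \<le> 1" by simp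
    ultimately show "\<bar>Ra a b\<bar> \<le> 4/3" by arith
  qed
  have m2: "max_abs P Rn \<le> 2/3"
  proof (rule max_abs_le[OF finP Pne])
    fix a b assume "a \<in> P" "b \<in> P"
    then have "\<bar>Ra a b - (if a = b then 1 else 0)\<bar> \<le> 1/3" "\<bar>R a b - (if a = b then 1 else 0)\<bar> \<le> 1/3"
      using Rac[of a b] Rc[of a b] unfolding Ra_def R_def by simp_all
    then show "\<bar>Rn a b\<bar> \<le> 2/3" unfolding Rn_def by arith
  qed
  have m3: "max_abs P R \<le> max_abs P Ra + max_abs P Rn"
  proof (rule max_abs_le[OF finP Pne])
    fix a b assume ab': "a \<in> P" "b \<in> P"
    have "\<bar>R a b\<bar> \<le> \<bar>Ra a b\<bar> + \<bar>Rn a b\<bar>" unfolding Rn_def by simp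
    also have "\<dots> \<le> max_abs P Ra + max_abs P Rn"
      using max_abs_ge[OF finP ab', of Ra] max_abs_ge[OF finP ab', of Rn] by simp
    finally show "\<bar>R a b\<bar> \<le> max_abs P Ra + max_abs P Rn" .
  qed
  show ?thesis unfolding Let_def SbE
    using m1 m2 m3 unfolding R_def Ra_def Rn_def by simp
qed


end
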